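(* Consider a recurrent network of $N$ units partitioned into $C$ cell types, with recurrent weight matrix $W$, a scalar $\mu$, and, at each time $t=1,2,\dots$, given eligibility traces $e_{pq,t}$, learning signals $L_{j,t}=\frac{\partial E}{\partial z_{j,t}}$ and activation derivatives $h_{j,t}$. The ModProp update $$\Delta W_{pq}\big|_t=L_{p,t}\,e_{pq,t}+\sum_{\alpha\in C}\Big(\sum_{j\in\alpha}L_{j,t}h_{j,t}\Big)\sum_{s=1}^{t}(W^s)_{\alpha\beta}\,\mu^{s-1}\,e_{pq,t-s}\qquad(p\in\beta)$$ admits an online (causal, computed in real time as $t$ advances) in-silico implementation, computing $\Delta W_{pq}|_t$ for all $p,q$ at every time step, with $O(CN^2)$ storage and $O(C^2N^2)$ computational complexity per time step.
   Context: For cell types $\alpha,\beta$, $N_\alpha$ is the number of units of type $\alpha$, $W_{\alpha\beta}=\mathbb{E}_{j\in\alpha,p\in\beta}[W_{jp}]$ is the average of the recurrent weights from type-$\beta$ units to type-$\alpha$ units, $(W^1)_{\alpha\beta}=W_{\alpha\beta}$, and $(W^{s+1})_{\alpha\beta}=\sum_{\gamma\in C}N_\gamma (W^1)_{\alpha\gamma}(W^s)_{\gamma\beta}$ (the type-level entries of the $(s+1)$-th power of the matrix whose $(i,j)$ entry is $W_{\alpha\beta}$ for $i\in\alpha,j\in\beta$). The implementation need not be biologically plausible. *)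

theory Defs
  imports Main "HOL.Real"
begin

text \<open>Units are 0..N-1, cell types are 0..C-1, ct j is the type of unit j.
  W j p is the recurrent weight from unit p to unit j.
  e p q t is the eligibility trace e_{pq,t} (t = 0,1,2,...),
  L j t is the learning signal L_{j,t}, h j t the activation derivative h_{j,t}.\<close>

definition ncount :: "nat \<Rightarrow> (nat \<Rightarrow> nat) \<Rightarrow> nat \<Rightarrow> nat" where
  "ncount N ct \<alpha> = card {j. j < N \<and> ct j = \<alpha>}"

definition Wavg :: "nat \<Rightarrow> (nat \<Rightarrow> nat) \<Rightarrow> (nat \<Rightarrow> nat \<Rightarrow> real) \<Rightarrow> nat \<Rightarrow> nat \<Rightarrow> real" where
  "Wavg N ct W \<alpha> \<beta> =
     (\<Sum>j\<in>{j. j < N \<and> ct j = \<alpha>}. \<Sum>p\<in>{p. p < N \<and> ct p = \<beta>}. W j p)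
       / (real (ncount N ct \<alpha>) * real (ncount N ct \<beta>))"

text \<open>Type-level powers: tpow s = (W^s)_{\<alpha>\<beta>} for s \<ge> 1 (the value at s = 0 is unused).\<close>
fun tpow :: "nat \<Rightarrow> nat \<Rightarrow> (nat \<Rightarrow> nat) \<Rightarrow> (nat \<Rightarrow> nat \<Rightarrow> real) \<Rightarrow> nat \<Rightarrow> nat \<Rightarrow> nat \<Rightarrow> real" where
  "tpow N C ct W 0 \<alpha> \<beta> = 0"
| "tpow N C ct W (Suc s) \<alpha> \<beta> =
     (if s = 0 then Wavg N ct W \<alpha> \<beta>
      else (\<Sum>\<gamma><C. real (ncount N ct \<gamma>) * Wavg N ct W \<alpha> \<gamma> * tpow N C ct W s \<gamma> \<beta>))"

definition modprop_update ::
  "nat \<Rightarrow> nat \<Rightarrow> (nat \<Rightarrow> nat) \<Rightarrow> (nat \<Rightarrow> nat \<Rightarrow> real) \<Rightarrow> real \<Rightarrow>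
   (nat \<Rightarrow> nat \<Rightarrow> nat \<Rightarrow> real) \<Rightarrow> (nat \<Rightarrow> nat \<Rightarrow> real) \<Rightarrow> (nat \<Rightarrow> nat \<Rightarrow> real) \<Rightarrow>
   nat \<Rightarrow> nat \<Rightarrow> nat \<Rightarrow> real" where
  "modprop_update N C ct W \<mu> e L h p q t =
     L p t * e p q t +
     (\<Sum>\<alpha><C. (\<Sum>j\<in>{j. j < N \<and> ct j = \<alpha>}. L j t * h j t) *
        (\<Sum>s\<in>{1..t}. tpow N C ct W s \<alpha> (ct p) * \<mu> ^ (s - 1) * e p q (t - s)))"

text \<open>A machine has M real registers (this is its total storage). At each time step
  the current inputs are written into fixed registers, then a fixed straight-line
  program is executed (its length is the computational cost of the step), and the
  outputs are read from fixed registers. Registers persist between time steps and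
  start at 0.\<close>

datatype instr = Const nat real | Add nat nat nat | Mul nat nat nat

fun exec_instr :: "instr \<Rightarrow> (nat \<Rightarrow> real) \<Rightarrow> (nat \<Rightarrow> real)" where
  "exec_instr (Const d c) m = m(d := c)"
| "exec_instr (Add d a b) m = m(d := m a + m b)"
| "exec_instr (Mul d a b) m = m(d := m a * m b)"

definition run_prog :: "instr list \<Rightarrow> (nat \<Rightarrow> real) \<Rightarrow> (nat \<Rightarrow> real)" where
  "run_prog prog m = fold exec_instr prog m"

fun instr_regs :: "instr \<Rightarrow> nat set" where
  "instr_regs (Const d c) = {d}"
| "instr_regs (Add d a b) = {d, a, b}"
| "instr_regs (Mul d a b) = {d, a, b}"

definition load_inputs :: "(nat \<Rightarrow> nat) \<Rightarrow> nat \<Rightarrow> (nat \<Rightarrow> real) \<Rightarrow> (nat \<Rightarrow> real) \<Rightarrow> (nat \<Rightarrow> real)" where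
  "load_inputs posIn I inp m = fold (\<lambda>i m'. m'(posIn i := inp i)) [0..<I] m"

fun mem_seq :: "instr list \<Rightarrow> (nat \<Rightarrow> nat) \<Rightarrow> nat \<Rightarrow> (nat \<Rightarrow> nat \<Rightarrow> real) \<Rightarrow> nat \<Rightarrow> (nat \<Rightarrow> real)" where
  "mem_seq prog posIn I inp 0 = run_prog prog (load_inputs posIn I (inp 0) (\<lambda>_. 0))"
| "mem_seq prog posIn I inp (Suc t) = run_prog prog (load_inputs posIn I (inp (Suc t)) (mem_seq prog posIn I inp t))"

definition n_inputs :: "nat \<Rightarrow> nat" where
  "n_inputs N = 2 * N^2 + 2 * N + 1"

definition mp_input ::
  "nat \<Rightarrow> (nat \<Rightarrow> nat \<Rightarrow> real) \<Rightarrow> real \<Rightarrow> (nat \<Rightarrow> nat \<Rightarrow> nat \<Rightarrow> real) \<Rightarrow>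
   (nat \<Rightarrow> nat \<Rightarrow> real) \<Rightarrow> (nat \<Rightarrow> nat \<Rightarrow> real) \<Rightarrow> nat \<Rightarrow> nat \<Rightarrow> real" where
  "mp_input N W \<mu> e L h t i =
     (if i < N^2 then W (i div N) (i mod N)
      else if i < 2 * N^2 then e ((i - N^2) div N) ((i - N^2) mod N) t
      else if i < 2 * N^2 + N then L (i - 2 * N^2) t
      else if i < 2 * N^2 + 2 * N then h (i - 2 * N^2 - N) t
      else \<mu>)"

definition valid_machine :: "nat \<Rightarrow> instr list \<Rightarrow> (nat \<Rightarrow> nat) \<Rightarrow> (nat \<Rightarrow> nat \<Rightarrow> nat) \<Rightarrow> nat \<Rightarrow> bool" where
  "valid_machine M prog posIn posOut N \<longleftrightarrow>
     (\<forall>ins \<in> set prog. \<forall>r \<in> instr_regs ins. r < M) \<and>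
     (\<forall>i < n_inputs N. posIn i < M) \<and>
     (\<forall>p < N. \<forall>q < N. posOut p q < M)"

end

theory Submission
  imports Defs
begin


type_synonym trm = "real \<times> nat \<times> nat"

definition tbody :: "nat \<Rightarrow> nat \<Rightarrow> nat \<Rightarrow> trm \<Rightarrow> instr list" where
  "tbody t1 t2 d tm = (case tm of (c,a,b) \<Rightarrow> [Mul t1 a b, Const t2 c, Mul t1 t1 t2, Add d d t1])"

definition dotp :: "nat \<Rightarrow> nat \<Rightarrow> nat \<Rightarrow> trm list \<Rightarrow> instr list" where
  "dotp t1 t2 d ts = Const d 0 # concat (map (tbody t1 t2 d) ts)"

definition dval :: "(nat \<Rightarrow> real) \<Rightarrow> trm list \<Rightarrow> real" where
  "dval m ts = sum_list (map (\<lambda>(c,a,b). c * m a * m b) ts)"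

definition par :: "nat \<Rightarrow> nat \<Rightarrow> ('i \<Rightarrow> nat) \<Rightarrow> ('i \<Rightarrow> trm list) \<Rightarrow> 'i list \<Rightarrow> instr list" where
  "par t1 t2 D TS is = concat (map (\<lambda>i. dotp t1 t2 (D i) (TS i)) is)"

lemma run_prog_append: "run_prog (xs @ ys) m = run_prog ys (run_prog xs m)"
  by (simp add: run_prog_def)

lemma run_prog_Cons: "run_prog (x # xs) m = run_prog xs (exec_instr x m)"
  by (simp add: run_prog_def)

lemma run_prog_Nil: "run_prog [] m = m"
  by (simp add: run_prog_def)

lemma dval_cong:
  assumes "\<forall>(c,a,b)\<in>set ts. m a = m' a \<and> m b = m' b"
  shows "dval m ts = dval m' ts"
  using assms unfolding dval_def by (induction ts) auto

lemma tbody_run: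
  assumes "t1 \<noteq> t2" "d \<noteq> t1" "d \<noteq> t2" "a \<notin> {d,t1,t2}" "b \<notin> {d,t1,t2}"
  shows "run_prog (tbody t1 t2 d (c,a,b)) m d = m d + c * m a * m b"
    and "r \<notin> {d,t1,t2} \<Longrightarrow> run_prog (tbody t1 t2 d (c,a,b)) m r = m r"
  using assms by (auto simp: tbody_def run_prog_def)

lemma loop_run:
  assumes "t1 \<noteq> t2" "d \<noteq> t1" "d \<noteq> t2"
    "\<forall>(c,a,b)\<in>set ts. a \<notin> {d,t1,t2} \<and> b \<notin> {d,t1,t2}"
  shows "run_prog (concat (map (tbody t1 t2 d) ts)) m d = m d + dval m ts \<and>
    (\<forall>r. r \<notin> {d,t1,t2} \<longrightarrow> run_prog (concat (map (tbody t1 t2 d) ts)) m r = m r)"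
  using assms(4)
proof (induction ts arbitrary: m)
  case Nil
  then show ?case by (simp add: run_prog_Nil dval_def)
next
  case (Cons x ts)
  obtain c a b where x: "x = (c,a,b)" by (cases x) auto
  define m' where "m' = run_prog (tbody t1 t2 d (c,a,b)) m"
  have ab: "a \<notin> {d,t1,t2}" "b \<notin> {d,t1,t2}" using Cons.prems x by auto
  have m'd: "m' d = m d + c * m a * m b" unfolding m'_def by (rule tbody_run(1)) (use assms ab in auto)
  have m'r: "\<And>r. r \<notin> {d,t1,t2} \<Longrightarrow> m' r = m r" unfolding m'_def by (rule tbody_run(2)) (use assms ab in auto)
  have IH: "run_prog (concat (map (tbody t1 t2 d) ts)) m' d = m' d + dval m' ts \<and>
    (\<forall>r. r \<notin> {d,t1,t2} \<longrightarrow> run_prog (concat (map (tbody t1 t2 d) ts)) m' r = m' r)"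
    using Cons by auto
  have dv: "dval m' ts = dval m ts"
    by (rule dval_cong) (use Cons.prems m'r in fastforce)
  show ?case using IH m'd m'r dv
    by (simp add: x run_prog_append m'_def dval_def)
qed

lemma dotp_run:
  assumes "t1 \<noteq> t2" "d \<noteq> t1" "d \<noteq> t2"
    "\<forall>(c,a,b)\<in>set ts. a \<notin> {d,t1,t2} \<and> b \<notin> {d,t1,t2}"
  shows "run_prog (dotp t1 t2 d ts) m d = dval m ts \<and>
    (\<forall>r. r \<notin> {d,t1,t2} \<longrightarrow> run_prog (dotp t1 t2 d ts) m r = m r)"
proof -
  have 1: "\<forall>(c,a,b)\<in>set ts. (m(d:=0)) a = m a \<and> (m(d:=0)) b = m b" using assms(4) by auto
  show ?thesis using loop_run[OF assms, of "m(d:=0)"] dval_cong[OF 1]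
    by (simp add: dotp_def run_prog_Cons)
qed

lemma par_run:
  assumes "t1 \<noteq> t2" "inj_on D (set is)" "t1 \<notin> D ` set is" "t2 \<notin> D ` set is"
    "\<forall>i\<in>set is. \<forall>(c,a,b)\<in>set (TS i). a \<notin> D ` set is \<union> {t1,t2} \<and> b \<notin> D ` set is \<union> {t1,t2}"
  shows "(\<forall>i\<in>set is. run_prog (par t1 t2 D TS is) m (D i) = dval m (TS i)) \<and>
    (\<forall>r. r \<notin> D ` set is \<union> {t1,t2} \<longrightarrow> run_prog (par t1 t2 D TS is) m r = m r)"
  using assms(2-5)
proof (induction "is" arbitrary: m)
  case Nil
  then show ?case by (simp add: par_def run_prog_Nil)
next
  case (Cons i "is")
  define m' where "m' = run_prog (dotp t1 t2 (D i) (TS i)) m"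
  have src: "\<forall>(c,a,b)\<in>set (TS i). a \<notin> {D i,t1,t2} \<and> b \<notin> {D i,t1,t2}"
    using Cons.prems(4) by fastforce
  have dr: "m' (D i) = dval m (TS i) \<and> (\<forall>r. r \<notin> {D i,t1,t2} \<longrightarrow> m' r = m r)"
    unfolding m'_def by (rule dotp_run) (use assms(1) Cons.prems src in auto)
  have IH: "(\<forall>i\<in>set is. run_prog (par t1 t2 D TS is) m' (D i) = dval m' (TS i)) \<and>
    (\<forall>r. r \<notin> D ` set is \<union> {t1,t2} \<longrightarrow> run_prog (par t1 t2 D TS is) m' r = m' r)"
  proof (rule Cons.IH)
    show "inj_on D (set is)" "t1 \<notin> D ` set is" "t2 \<notin> D ` set is" using Cons.prems by auto
    show "\<forall>i\<in>set is. \<forall>(c,a,b)\<in>set (TS i). a \<notin> D ` set is \<union> {t1,t2} \<and> b \<notin> D ` set is \<union> {t1,t2}"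
    proof (intro ballI, clarify)
      fix j c a b assume "j \<in> set is" "(c,a,b) \<in> set (TS j)"
      then have "a \<notin> D ` set (i#is) \<union> {t1,t2} \<and> b \<notin> D ` set (i#is) \<union> {t1,t2}"
        using Cons.prems(4) by fastforce
      then show "a \<notin> D ` set is \<union> {t1,t2} \<and> b \<notin> D ` set is \<union> {t1,t2}" by auto
    qed
  qed
  have eq: "run_prog (par t1 t2 D TS (i # is)) m = run_prog (par t1 t2 D TS is) m'"
    by (simp add: par_def run_prog_append m'_def)
  have cong: "\<And>j. j \<in> set (i # is) \<Longrightarrow> dval m' (TS j) = dval m (TS j)"
  proof -
    fix j assume j: "j \<in> set (i # is)"
    show "dval m' (TS j) = dval m (TS j)"
    proof (rule dval_cong, clarify)
      fix c a b assume "(c,a,b) \<in> set (TS j)"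
      then have "a \<notin> D ` set (i # is) \<union> {t1,t2}" "b \<notin> D ` set (i # is) \<union> {t1,t2}"
        using Cons.prems(4) j by fastforce+
      then show "m' a = m a \<and> m' b = m b" using dr by auto
    qed
  qed
  show ?case
  proof (intro conjI ballI allI impI)
    fix j assume j: "j \<in> set (i # is)"
    show "run_prog (par t1 t2 D TS (i # is)) m (D j) = dval m (TS j)"
    proof (cases "j \<in> set is")
      case True
      then show ?thesis using IH cong j eq by auto
    next
      case False
      then have "j = i" using j by auto
      moreover have "D i \<notin> D ` set is \<union> {t1,t2}" using Cons.prems False \<open>j = i\<close> by auto
      ultimately show ?thesis using IH dr eq by auto
    qed
  next
    fix r assume r: "r \<notin> D ` set (i # is) \<union> {t1,t2}"
    then show "run_prog (par t1 t2 D TS (i # is)) m r = m r" using IH dr eq by auto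
  qed
qed



lemma sum_list_upt0: "sum_list (map f [0..<n]) = (\<Sum>i<n. f i)"
  by (induction n) auto

lemma idx_lt: "a < (A::nat) \<Longrightarrow> b < B \<Longrightarrow> a*B+b < A*B"
proof -
  assume "a < A" "b < B"
  then have "Suc a \<le> A" by simp
  then have "Suc a * B \<le> A * B" by (rule mult_right_mono) simp
  then show ?thesis using \<open>b < B\<close> by simp
qed

lemma idx_inj: "b < (B::nat) \<Longrightarrow> b' < B \<Longrightarrow> a*B+b = a'*B+b' \<Longrightarrow> a = a' \<and> b = b'"
proof -
  assume h: "b < B" "b' < B" "a*B+b = a'*B+b'"
  have B: "B \<noteq> 0" using h by auto
  have "(a*B+b) div B = a" "(a'*B+b') div B = a'" using h(1,2) B by (simp_all add: add.commute[of "_*B"])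
  moreover have "(a*B+b) mod B = b" "(a'*B+b') mod B = b'" using h(1,2) by auto
  ultimately show ?thesis using h(3) by metis
qed

lemma inj3: "p < N \<Longrightarrow> q < N \<Longrightarrow> p' < N \<Longrightarrow> q' < (N::nat) \<Longrightarrow>
   a*(N*N)+(p*N+q) = a'*(N*N)+(p'*N+q') \<Longrightarrow> a = a' \<and> p = p' \<and> q = q'"
  using idx_inj[of "p*N+q" "N*N" "p'*N+q'" a a'] idx_lt[of p N q N] idx_lt[of p' N q' N]
    idx_inj[of q N q' p p'] by auto

lemma lt2: "p < N \<Longrightarrow> q < (N::nat) \<Longrightarrow> p*N+q < N*N" by (rule idx_lt)
lemma lt3: "a < C \<Longrightarrow> p < N \<Longrightarrow> q < (N::nat) \<Longrightarrow> a*(N*N)+(p*N+q) < C*(N*N)"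
  by (rule idx_lt) (auto intro: idx_lt)



definition Gv :: "nat \<Rightarrow> nat \<Rightarrow> (nat \<Rightarrow> nat) \<Rightarrow> (nat \<Rightarrow> nat \<Rightarrow> real) \<Rightarrow> real \<Rightarrow>
   (nat \<Rightarrow> nat \<Rightarrow> nat \<Rightarrow> real) \<Rightarrow> nat \<Rightarrow> nat \<Rightarrow> nat \<Rightarrow> nat \<Rightarrow> real" where
  "Gv N C ct W \<mu> e t a p q = (\<Sum>s\<in>{1..t}. tpow N C ct W s a (ct p) * \<mu> ^ (s - 1) * e p q (t - s))"

lemma Gv_0: "Gv N C ct W \<mu> e 0 a p q = 0"
  by (simp add: Gv_def)

lemma Gv_Suc:
  "Gv N C ct W \<mu> e (Suc t) a p q = Wavg N ct W a (ct p) * e p q t +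
     (\<Sum>g<C. (\<mu> * real (ncount N ct g) * Wavg N ct W a g) * Gv N C ct W \<mu> e t g p q)"
proof -
  define f where "f s = tpow N C ct W s a (ct p) * \<mu> ^ (s - 1) * e p q (Suc t - s)" for s
  have "Gv N C ct W \<mu> e (Suc t) a p q = (\<Sum>s\<in>{1..Suc t}. f s)" by (simp add: Gv_def f_def)
  also have "\<dots> = f 1 + (\<Sum>s\<in>{Suc 1..Suc t}. f s)" by (rule sum.atLeast_Suc_atMost) simp
  also have "(\<Sum>s\<in>{Suc 1..Suc t}. f s) = (\<Sum>s\<in>{1..t}. f (Suc s))" by (rule sum.shift_bounds_cl_Suc_ivl)
  also have "\<dots> = (\<Sum>s\<in>{1..t}. \<Sum>g<C. (\<mu> * real (ncount N ct g) * Wavg N ct W a g) *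
                    (tpow N C ct W s g (ct p) * \<mu> ^ (s - 1) * e p q (t - s)))"
  proof (rule sum.cong[OF refl])
    fix s assume s: "s \<in> {1..t}"
    then obtain s' where s': "s = Suc s'" by (cases s) auto
    have "f (Suc s) = (\<Sum>g<C. real (ncount N ct g) * Wavg N ct W a g * tpow N C ct W s g (ct p)) * (\<mu> * \<mu> ^ (s - 1)) * e p q (t - s)"
      using s by (simp add: f_def s')
    also have "\<dots> = (\<Sum>g<C. (\<mu> * real (ncount N ct g) * Wavg N ct W a g) *
                    (tpow N C ct W s g (ct p) * \<mu> ^ (s - 1) * e p q (t - s)))"
      unfolding sum_distrib_right by (rule sum.cong[OF refl]) (simp add: mult_ac)
    finally show "f (Suc s) = \<dots>" .
  qed
  also have "\<dots> = (\<Sum>g<C. \<Sum>s\<in>{1..t}. (\<mu> * real (ncount N ct g) * Wavg N ct W a g) *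
                    (tpow N C ct W s g (ct p) * \<mu> ^ (s - 1) * e p q (t - s)))"
    by (rule sum.swap)
  also have "\<dots> = (\<Sum>g<C. (\<mu> * real (ncount N ct g) * Wavg N ct W a g) * Gv N C ct W \<mu> e t g p q)"
    by (simp add: Gv_def sum_distrib_left)
  finally show ?thesis by (simp add: f_def)
qed



lemma par_run_rg:
  fixes rg :: "nat \<Rightarrow> nat"
  assumes "rg t1 \<noteq> rg t2" "inj_on D (set is)" "\<forall>i\<in>set is. rg (D i) = R" "rg t1 \<noteq> R" "rg t2 \<noteq> R"
    "\<forall>i\<in>set is. \<forall>(c,a,b)\<in>set (TS i). rg a \<notin> {R, rg t1, rg t2} \<and> rg b \<notin> {R, rg t1, rg t2}"
  shows "(\<forall>i\<in>set is. run_prog (par t1 t2 D TS is) m (D i) = dval m (TS i)) \<and>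
    (\<forall>r. rg r \<notin> {R, rg t1, rg t2} \<longrightarrow> run_prog (par t1 t2 D TS is) m r = m r)"
proof -
  have "(\<forall>i\<in>set is. run_prog (par t1 t2 D TS is) m (D i) = dval m (TS i)) \<and>
    (\<forall>r. r \<notin> D ` set is \<union> {t1,t2} \<longrightarrow> run_prog (par t1 t2 D TS is) m r = m r)"
  proof (rule par_run)
    show "t1 \<noteq> t2" using assms(1) by auto
    show "inj_on D (set is)" by fact
    show "t1 \<notin> D ` set is" "t2 \<notin> D ` set is" using assms(3,4,5) by auto
    show "\<forall>i\<in>set is. \<forall>(c,a,b)\<in>set (TS i). a \<notin> D ` set is \<union> {t1,t2} \<and> b \<notin> D ` set is \<union> {t1,t2}"
    proof (intro ballI, clarify)
      fix i c a b assume "i \<in> set is" "(c,a,b) \<in> set (TS i)"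
      then have "rg a \<notin> {R, rg t1, rg t2} \<and> rg b \<notin> {R, rg t1, rg t2}" using assms(6) by fastforce
      then show "a \<notin> D ` set is \<union> {t1,t2} \<and> b \<notin> D ` set is \<union> {t1,t2}" using assms(3) by auto
    qed
  qed
  moreover have "\<And>r. rg r \<notin> {R, rg t1, rg t2} \<Longrightarrow> r \<notin> D ` set is \<union> {t1,t2}" using assms(3) by auto
  ultimately show ?thesis by blast
qed

locale lay = fixes N C :: nat and ct :: "nat \<Rightarrow> nat"
begin

definition "aW p q = p*N+q"
definition "aE p q = N*N + (p*N+q)"
definition "aL j = 2*(N*N) + j"
definition "aH j = 2*(N*N) + N + j"
definition "aMu = 2*(N*N) + 2*N"
definition "aOne = 2*(N*N) + 2*N + 1"
definition "aT1 = aOne + 1"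
definition "aT2 = aOne + 2"
definition "aA a = aOne + 3 + a"
definition "aK a g = aOne + 3 + C + (a*C+g)"
definition "aV a b = aOne + 3 + C + C*C + (a*C+b)"
definition "bO = aOne + 3 + C + 2*(C*C)"
definition "aO p q = bO + (p*N+q)"
definition "aG a p q = bO + N*N + (a*(N*N)+(p*N+q))"
definition "aT a p q = bO + N*N + C*(N*N) + (a*(N*N)+(p*N+q))"
definition "Msz = bO + N*N + 2*(C*(N*N))"

definition rg :: "nat \<Rightarrow> nat" where
  "rg x = (if x < N*N then 0 else if x < 2*(N*N) then 1 else if x < 2*(N*N)+N then 2
    else if x < 2*(N*N)+2*N then 3 else if x = aMu then 4 else if x = aOne then 5
    else if x = aT1 then 6 else if x = aT2 then 7 else if x < aOne + 3 + C then 8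
    else if x < aOne + 3 + C + C*C then 9 else if x < bO then 10 else if x < bO + N*N then 11
    else if x < bO + N*N + C*(N*N) then 12 else 13)"

lemmas adefs = aW_def aE_def aL_def aH_def aMu_def aOne_def aT1_def aT2_def aA_def aK_def aV_def
  bO_def aO_def aG_def aT_def Msz_def

lemma rg_W[simp]: "p < N \<Longrightarrow> q < N \<Longrightarrow> rg (aW p q) = 0"
  using lt2[of p N q] by (simp add: rg_def adefs)
lemma rg_E[simp]: "p < N \<Longrightarrow> q < N \<Longrightarrow> rg (aE p q) = 1"
  using lt2[of p N q] by (simp add: rg_def adefs)
lemma rg_L[simp]: "j < N \<Longrightarrow> rg (aL j) = 2"
  by (simp add: rg_def adefs)
lemma rg_H[simp]: "j < N \<Longrightarrow> rg (aH j) = 3"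
  by (simp add: rg_def adefs)
lemma rg_Mu[simp]: "rg aMu = 4"
  by (simp add: rg_def adefs)
lemma rg_One[simp]: "rg aOne = 5"
  by (simp add: rg_def adefs)
lemma rg_T1[simp]: "rg aT1 = 6"
  by (simp add: rg_def adefs)
lemma rg_T2[simp]: "rg aT2 = 7"
  by (simp add: rg_def adefs)
lemma rg_A[simp]: "a < C \<Longrightarrow> rg (aA a) = 8"
  by (simp add: rg_def adefs)
lemma rg_K[simp]: "a < C \<Longrightarrow> g < C \<Longrightarrow> rg (aK a g) = 9"
  using idx_lt[of a C g C] by (simp add: rg_def adefs)
lemma rg_V[simp]: "a < C \<Longrightarrow> g < C \<Longrightarrow> rg (aV a g) = 10"
  using idx_lt[of a C g C] by (simp add: rg_def adefs)
lemma rg_O[simp]: "p < N \<Longrightarrow> q < N \<Longrightarrow> rg (aO p q) = 11"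
  using lt2[of p N q] by (simp add: rg_def adefs)
lemma rg_G[simp]: "a < C \<Longrightarrow> p < N \<Longrightarrow> q < N \<Longrightarrow> rg (aG a p q) = 12"
  using lt3[of a C p N q] by (simp add: rg_def adefs)
lemma rg_T[simp]: "a < C \<Longrightarrow> p < N \<Longrightarrow> q < N \<Longrightarrow> rg (aT a p q) = 13"
  using lt3[of a C p N q] by (simp add: rg_def adefs)

lemma T_lt: "a < C \<Longrightarrow> p < N \<Longrightarrow> q < N \<Longrightarrow> aT a p q < Msz"
  using lt3[of a C p N q] by (simp add: adefs)

end



context lay begin

definition "cK a g = real (ncount N ct g) / (real (ncount N ct a) * real (ncount N ct g))"
definition "cV a b = 1 / (real (ncount N ct a) * real (ncount N ct b))"

definition "TSA a = map (\<lambda>j. (if ct j = a then 1 else 0, aL j, aH j)) [0..<N]"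
definition "TSK ag = (case ag of (a,g) \<Rightarrow> concat (map (\<lambda>j. map (\<lambda>p.
    (if ct j = a \<and> ct p = g then cK a g else 0, aW j p, aMu)) [0..<N]) [0..<N]))"
definition "TSV ag = (case ag of (a,g) \<Rightarrow> concat (map (\<lambda>j. map (\<lambda>p.
    (if ct j = a \<and> ct p = g then cV a g else 0, aW j p, aOne)) [0..<N]) [0..<N]))"
definition "TSO pq = (case pq of (p,q) \<Rightarrow> (1, aL p, aE p q) # map (\<lambda>a. (1, aA a, aG a p q)) [0..<C])"
definition "TST apq = (case apq of (a,p,q) \<Rightarrow> (1, aV a (ct p), aE p q) # map (\<lambda>g. (1, aK a g, aG g p q)) [0..<C])"
definition "TSG apq = (case apq of (a,p,q) \<Rightarrow> [(1::real, aT a p q, aOne)])"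

definition "idx2 = List.product [0..<C] [0..<C]"
definition "idxN = List.product [0..<N] [0..<N]"
definition "idx3 = List.product [0..<C] idxN"

definition "P1 = par aT1 aT2 aA TSA [0..<C]"
definition "P2 = par aT1 aT2 (\<lambda>(a,g). aK a g) TSK idx2"
definition "P2b = par aT1 aT2 (\<lambda>(a,g). aV a g) TSV idx2"
definition "P3 = par aT1 aT2 (\<lambda>(p,q). aO p q) TSO idxN"
definition "P4 = par aT1 aT2 (\<lambda>(a,p,q). aT a p q) TST idx3"
definition "P5 = par aT1 aT2 (\<lambda>(a,p,q). aG a p q) TSG idx3"

definition "prog = Const aOne 1 # P1 @ P2 @ P2b @ P3 @ P4 @ P5"

lemma inj_A: "inj_on aA S" by (auto simp: inj_on_def aA_def)
lemma inj_K: "inj_on (\<lambda>(a,g). aK a g) ({0..<C} \<times> {0..<C})" by (auto simp: inj_on_def aK_def idx2_def dest: idx_inj)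
lemma inj_V: "inj_on (\<lambda>(a,g). aV a g) ({0..<C} \<times> {0..<C})" by (auto simp: inj_on_def aV_def idx2_def dest: idx_inj)
lemma inj_O: "inj_on (\<lambda>(p,q). aO p q) ({0..<N} \<times> {0..<N})" by (auto simp: inj_on_def aO_def idxN_def dest: idx_inj)
lemma inj_T: "inj_on (\<lambda>(a,p,q). aT a p q) ({0..<C} \<times> {0..<N} \<times> {0..<N})" by (auto simp: inj_on_def aT_def idx3_def idxN_def dest: inj3)
lemma inj_G: "inj_on (\<lambda>(a,p,q). aG a p q) ({0..<C} \<times> {0..<N} \<times> {0..<N})" by (auto simp: inj_on_def aG_def idx3_def idxN_def dest: inj3)

lemma P1_run: "(\<forall>a<C. run_prog P1 m (aA a) = dval m (TSA a)) \<and>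
   (\<forall>r. rg r \<notin> {8,6,7} \<longrightarrow> run_prog P1 m r = m r)"
proof -
  have "(\<forall>i\<in>set [0..<C]. run_prog P1 m (aA i) = dval m (TSA i)) \<and>
    (\<forall>r. rg r \<notin> {8, rg aT1, rg aT2} \<longrightarrow> run_prog P1 m r = m r)"
    unfolding P1_def
    by (rule par_run_rg) (auto simp: inj_A TSA_def)
  then show ?thesis by simp
qed

lemma P2_run: "(\<forall>a<C. \<forall>g<C. run_prog P2 m (aK a g) = dval m (TSK (a,g))) \<and>
   (\<forall>r. rg r \<notin> {9,6,7} \<longrightarrow> run_prog P2 m r = m r)"
proof -
  have "(\<forall>i\<in>set idx2. run_prog P2 m ((\<lambda>(a,g). aK a g) i) = dval m (TSK i)) \<and>
    (\<forall>r. rg r \<notin> {9, rg aT1, rg aT2} \<longrightarrow> run_prog P2 m r = m r)"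
    unfolding P2_def
    by (rule par_run_rg) (auto simp: inj_K TSK_def idx2_def)
  then show ?thesis by (simp add: idx2_def)
qed

lemma P2b_run: "(\<forall>a<C. \<forall>g<C. run_prog P2b m (aV a g) = dval m (TSV (a,g))) \<and>
   (\<forall>r. rg r \<notin> {10,6,7} \<longrightarrow> run_prog P2b m r = m r)"
proof -
  have "(\<forall>i\<in>set idx2. run_prog P2b m ((\<lambda>(a,g). aV a g) i) = dval m (TSV i)) \<and>
    (\<forall>r. rg r \<notin> {10, rg aT1, rg aT2} \<longrightarrow> run_prog P2b m r = m r)"
    unfolding P2b_def
    by (rule par_run_rg) (auto simp: inj_V TSV_def idx2_def)
  then show ?thesis by (simp add: idx2_def)
qed

lemma P3_run: "(\<forall>p<N. \<forall>q<N. run_prog P3 m (aO p q) = dval m (TSO (p,q))) \<and>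
   (\<forall>r. rg r \<notin> {11,6,7} \<longrightarrow> run_prog P3 m r = m r)"
proof -
  have "(\<forall>i\<in>set idxN. run_prog P3 m ((\<lambda>(p,q). aO p q) i) = dval m (TSO i)) \<and>
    (\<forall>r. rg r \<notin> {11, rg aT1, rg aT2} \<longrightarrow> run_prog P3 m r = m r)"
    unfolding P3_def
    by (rule par_run_rg) (auto simp: inj_O TSO_def idxN_def)
  then show ?thesis by (simp add: idxN_def)
qed

lemma P4_run: assumes ctC: "\<forall>j<N. ct j < C"
  shows "(\<forall>a<C. \<forall>p<N. \<forall>q<N. run_prog P4 m (aT a p q) = dval m (TST (a,p,q))) \<and>
   (\<forall>r. rg r \<notin> {13,6,7} \<longrightarrow> run_prog P4 m r = m r)"
proof -
  have "(\<forall>i\<in>set idx3. run_prog P4 m ((\<lambda>(a,p,q). aT a p q) i) = dval m (TST i)) \<and>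
    (\<forall>r. rg r \<notin> {13, rg aT1, rg aT2} \<longrightarrow> run_prog P4 m r = m r)"
    unfolding P4_def
    by (rule par_run_rg) (auto simp: inj_T TST_def idx3_def idxN_def ctC)
  then show ?thesis by (simp add: idx3_def idxN_def)
qed

lemma P5_run:
  shows "(\<forall>a<C. \<forall>p<N. \<forall>q<N. run_prog P5 m (aG a p q) = dval m (TSG (a,p,q))) \<and>
   (\<forall>r. rg r \<notin> {12,6,7} \<longrightarrow> run_prog P5 m r = m r)"
proof -
  have "(\<forall>i\<in>set idx3. run_prog P5 m ((\<lambda>(a,p,q). aG a p q) i) = dval m (TSG i)) \<and>
    (\<forall>r. rg r \<notin> {12, rg aT1, rg aT2} \<longrightarrow> run_prog P5 m r = m r)"
    unfolding P5_def
    by (rule par_run_rg) (auto simp: inj_G TSG_def idx3_def idxN_def)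
  then show ?thesis by (simp add: idx3_def idxN_def)
qed

end


lemma dval_append: "dval m (xs @ ys) = dval m xs + dval m ys"
  by (simp add: dval_def)
lemma dval_concat: "dval m (concat xss) = sum_list (map (dval m) xss)"
  by (induction xss) (simp_all add: dval_append, simp add: dval_def)
lemma dval_map: "dval m (map f xs) = sum_list (map (\<lambda>x. case f x of (c,a,b) \<Rightarrow> c * m a * m b) xs)"
  by (simp add: dval_def o_def)
lemma dval_Cons: "dval m ((c,a,b) # xs) = c * m a * m b + dval m xs"
  by (simp add: dval_def)

lemma filt_sum: "(\<Sum>j\<in>{j. j < (N::nat) \<and> P j}. f j) = (\<Sum>j<N. if P j then f j else (0::real))"
proof -
  have e: "{j. j < N \<and> P j} = {j \<in> {..<N}. P j}" by auto
  show ?thesis unfolding e by (rule sum.inter_filter) simp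
qed

lemma Wsum: fixes W :: "nat \<Rightarrow> nat \<Rightarrow> real" shows "(\<Sum>j<(N::nat). \<Sum>p<N. (if ct j = a \<and> ct p = g then c else 0) * W j p * x) =
   c * x * (\<Sum>j\<in>{j. j<N \<and> ct j = a}. \<Sum>p\<in>{p. p<N \<and> ct p = g}. W j p)"
  unfolding filt_sum sum_distrib_left
  by (rule sum.cong[OF refl]) (auto simp: sum_distrib_left intro!: sum.cong)

lemma Wsum1: fixes W :: "nat \<Rightarrow> nat \<Rightarrow> real" shows "(\<Sum>j<(N::nat). \<Sum>p<N. (if ct j = a \<and> ct p = g then c else 0) * W j p) =
   c * (\<Sum>j\<in>{j. j<N \<and> ct j = a}. \<Sum>p\<in>{p. p<N \<and> ct p = g}. W j p)"
  using Wsum[where x=1] by simp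



context lay begin

lemma divmodN: "q < N \<Longrightarrow> (p*N+q) div N = p \<and> (p*N+q) mod (N::nat) = q"
proof -
  assume q: "q < N"
  then have "N \<noteq> 0" by auto
  then show ?thesis using q by (simp add: add.commute[of "p*N"])
qed

lemma inputs:
  assumes inp: "\<forall>r<n_inputs N. m0 r = mp_input N W \<mu> e L h t r"
  shows "p<N \<Longrightarrow> q<N \<Longrightarrow> m0 (aW p q) = W p q"
    and "p<N \<Longrightarrow> q<N \<Longrightarrow> m0 (aE p q) = e p q t"
    and "j<N \<Longrightarrow> m0 (aL j) = L j t"
    and "j<N \<Longrightarrow> m0 (aH j) = h j t"
    and "m0 aMu = \<mu>"
proof -
  assume pq: "p<N" "q<N"
  have l: "p*N+q < N*N" using lt2[OF pq] .
  show "m0 (aW p q) = W p q" using inp l divmodN[OF pq(2), of p]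
    by (simp add: aW_def n_inputs_def mp_input_def power2_eq_square)
  show "m0 (aE p q) = e p q t" using inp l divmodN[OF pq(2), of p]
    by (simp add: aE_def n_inputs_def mp_input_def power2_eq_square)
next
  assume j: "j<N"
  show "m0 (aL j) = L j t" using inp j
    by (simp add: aL_def n_inputs_def mp_input_def power2_eq_square)
  show "m0 (aH j) = h j t" using inp j
    by (simp add: aH_def n_inputs_def mp_input_def power2_eq_square)
next
  show "m0 aMu = \<mu>" using inp
    by (simp add: aMu_def n_inputs_def mp_input_def power2_eq_square)
qed

end


context lay begin

lemmas P1v = P1_run[THEN conjunct1, rule_format]
lemmas P1f = P1_run[THEN conjunct2, rule_format]
lemmas P2v = P2_run[THEN conjunct1, rule_format]
lemmas P2f = P2_run[THEN conjunct2, rule_format]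
lemmas P2bv = P2b_run[THEN conjunct1, rule_format]
lemmas P2bf = P2b_run[THEN conjunct2, rule_format]
lemmas P3v = P3_run[THEN conjunct1, rule_format]
lemmas P3f = P3_run[THEN conjunct2, rule_format]
lemmas P5v = P5_run[THEN conjunct1, rule_format]
lemmas P5f = P5_run[THEN conjunct2, rule_format]

lemma step:
  assumes ctC: "\<forall>j<N. ct j < C"
  and inp: "\<forall>r<n_inputs N. m0 r = mp_input N W \<mu> e L h t r"
  and G0: "\<forall>a<C. \<forall>p<N. \<forall>q<N. m0 (aG a p q) = Gv N C ct W \<mu> e t a p q"
  shows "\<forall>p<N. \<forall>q<N. run_prog prog m0 (aO p q) = modprop_update N C ct W \<mu> e L h p q t"
    and "\<forall>a<C. \<forall>p<N. \<forall>q<N. run_prog prog m0 (aG a p q) = Gv N C ct W \<mu> e (Suc t) a p q"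
proof -
  note P4v = P4_run[OF ctC, THEN conjunct1, rule_format]
  note P4f = P4_run[OF ctC, THEN conjunct2, rule_format]
  note I = inputs[OF inp]
  have G0': "\<And>a p q. a<C \<Longrightarrow> p<N \<Longrightarrow> q<N \<Longrightarrow> m0 (aG a p q) = Gv N C ct W \<mu> e t a p q"
    using G0 by auto
  define m1 where "m1 = m0(aOne := 1)"
  have m1f: "\<And>r. rg r \<noteq> 5 \<Longrightarrow> m1 r = m0 r" unfolding m1_def by auto
  have m1One: "m1 aOne = 1" unfolding m1_def by simp
  define m2 where "m2 = run_prog P1 m1"
  define m3 where "m3 = run_prog P2 m2"
  define m3b where "m3b = run_prog P2b m3"
  define m4 where "m4 = run_prog P3 m3b"
  define m5 where "m5 = run_prog P4 m4"
  define m6 where "m6 = run_prog P5 m5"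
  have run: "run_prog prog m0 = m6"
    by (simp add: prog_def run_prog_Cons run_prog_append m1_def m2_def m3_def m3b_def m4_def m5_def m6_def)
  have A2: "\<And>a. a<C \<Longrightarrow> m2 (aA a) = (\<Sum>j\<in>{j. j < N \<and> ct j = a}. L j t * h j t)"
    by (auto simp: m2_def P1v TSA_def dval_map sum_list_upt0 m1f I filt_sum intro!: sum.cong)
  have f2: "\<And>r. rg r \<notin> {8,6,7} \<Longrightarrow> m2 r = m1 r" by (simp add: m2_def P1f)
  have K3: "\<And>a g. a<C \<Longrightarrow> g<C \<Longrightarrow> m3 (aK a g) = \<mu> * real (ncount N ct g) * Wavg N ct W a g"
    by (simp add: m3_def P2v TSK_def dval_concat dval_map sum_list_upt0 f2 m1f I o_def Wsum cK_def Wavg_def)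
  have f3: "\<And>r. rg r \<notin> {9,6,7} \<Longrightarrow> m3 r = m2 r" by (simp add: m3_def P2f)
  have V3: "\<And>a g. a<C \<Longrightarrow> g<C \<Longrightarrow> m3b (aV a g) = Wavg N ct W a g"
    by (simp add: m3b_def P2bv TSV_def dval_concat dval_map sum_list_upt0 f3 f2 m1f m1One I o_def Wsum1 cV_def Wavg_def)
  have f3b: "\<And>r. rg r \<notin> {10,6,7} \<Longrightarrow> m3b r = m3 r" by (simp add: m3b_def P2bf)
  have O4: "\<And>p q. p<N \<Longrightarrow> q<N \<Longrightarrow> m4 (aO p q) = modprop_update N C ct W \<mu> e L h p q t"
    by (simp add: m4_def P3v TSO_def dval_Cons dval_map sum_list_upt0 f3b f3 f2 m1f I A2 G0'
          modprop_update_def Gv_def)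
  have f4: "\<And>r. rg r \<notin> {11,6,7} \<Longrightarrow> m4 r = m3b r" by (simp add: m4_def P3f)
  have T5: "\<And>a p q. a<C \<Longrightarrow> p<N \<Longrightarrow> q<N \<Longrightarrow> m5 (aT a p q) = Gv N C ct W \<mu> e (Suc t) a p q"
    using ctC by (simp add: m5_def P4v TST_def dval_Cons dval_map sum_list_upt0 f4 f3b f3 f2 m1f I V3 K3 G0'
          Gv_Suc)
  have f5: "\<And>r. rg r \<notin> {13,6,7} \<Longrightarrow> m5 r = m4 r" by (simp add: m5_def P4f)
  have G6: "\<And>a p q. a<C \<Longrightarrow> p<N \<Longrightarrow> q<N \<Longrightarrow> m6 (aG a p q) = Gv N C ct W \<mu> e (Suc t) a p q"
    by (simp add: m6_def P5v TSG_def dval_Cons dval_def T5 f5 f4 f3b f3 f2 m1One)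
  have O6: "\<And>p q. p<N \<Longrightarrow> q<N \<Longrightarrow> m6 (aO p q) = modprop_update N C ct W \<mu> e L h p q t"
    by (simp add: m6_def P5f f5 O4)
  show "\<forall>p<N. \<forall>q<N. run_prog prog m0 (aO p q) = modprop_update N C ct W \<mu> e L h p q t"
    using O6 run by simp
  show "\<forall>a<C. \<forall>p<N. \<forall>q<N. run_prog prog m0 (aG a p q) = Gv N C ct W \<mu> e (Suc t) a p q"
    using G6 run by simp
qed

end


lemma load_inputs_id: "load_inputs id I inp m r = (if r < I then inp r else m r)"
proof -
  have "\<And>m. fold (\<lambda>i m'. m'(i := inp i)) [0..<I] m r = (if r < I then inp r else m r)"
    by (induction I) auto
  then show ?thesis by (simp add: load_inputs_def)
qed

context lay begin

lemma G_ge: "n_inputs N \<le> aG a p q"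
  by (simp add: adefs n_inputs_def power2_eq_square)

lemma G_nlt[simp]: "\<not> aG a p q < n_inputs N"
  using G_ge[of a p q] by simp

lemma mem_inv:
  assumes ctC: "\<forall>j<N. ct j < C"
  shows "\<forall>a<C. \<forall>p<N. \<forall>q<N. mem_seq prog id (n_inputs N) (mp_input N W \<mu> e L h) t (aG a p q)
     = Gv N C ct W \<mu> e (Suc t) a p q"
proof (induction t)
  case 0
  show ?case unfolding mem_seq.simps
  proof (rule step(2)[OF ctC])
    show "\<forall>r<n_inputs N. load_inputs id (n_inputs N) (mp_input N W \<mu> e L h 0) (\<lambda>_. 0) r = mp_input N W \<mu> e L h 0 r"
      by (simp add: load_inputs_id)
    show "\<forall>a<C. \<forall>p<N. \<forall>q<N. load_inputs id (n_inputs N) (mp_input N W \<mu> e L h 0) (\<lambda>_. 0) (aG a p q) = Gv N C ct W \<mu> e 0 a p q"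
      by (simp add: load_inputs_id Gv_0)
  qed
next
  case (Suc t)
  show ?case unfolding mem_seq.simps
  proof (rule step(2)[OF ctC])
    show "\<forall>r<n_inputs N. load_inputs id (n_inputs N) (mp_input N W \<mu> e L h (Suc t)) (mem_seq prog id (n_inputs N) (mp_input N W \<mu> e L h) t) r = mp_input N W \<mu> e L h (Suc t) r"
      by (simp add: load_inputs_id)
    show "\<forall>a<C. \<forall>p<N. \<forall>q<N. load_inputs id (n_inputs N) (mp_input N W \<mu> e L h (Suc t)) (mem_seq prog id (n_inputs N) (mp_input N W \<mu> e L h) t) (aG a p q) = Gv N C ct W \<mu> e (Suc t) a p q"
      using Suc.IH unfolding load_inputs_id by (simp add: id_def)
  qed
qed

lemma mem_out:
  assumes ctC: "\<forall>j<N. ct j < C" and t: "1 \<le> t" and pq: "p < N" "q < N"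
  shows "mem_seq prog id (n_inputs N) (mp_input N W \<mu> e L h) t (aO p q) = modprop_update N C ct W \<mu> e L h p q t"
proof -
  obtain t' where t': "t = Suc t'" using t by (cases t) auto
  have "\<forall>p<N. \<forall>q<N. run_prog prog (load_inputs id (n_inputs N) (mp_input N W \<mu> e L h (Suc t')) (mem_seq prog id (n_inputs N) (mp_input N W \<mu> e L h) t')) (aO p q) = modprop_update N C ct W \<mu> e L h p q (Suc t')"
  proof (rule step(1)[OF ctC])
    show "\<forall>r<n_inputs N. load_inputs id (n_inputs N) (mp_input N W \<mu> e L h (Suc t')) (mem_seq prog id (n_inputs N) (mp_input N W \<mu> e L h) t') r = mp_input N W \<mu> e L h (Suc t') r"
      by (simp add: load_inputs_id)
    show "\<forall>a<C. \<forall>p<N. \<forall>q<N. load_inputs id (n_inputs N) (mp_input N W \<mu> e L h (Suc t')) (mem_seq prog id (n_inputs N) (mp_input N W \<mu> e L h) t') (aG a p q) = Gv N C ct W \<mu> e (Suc t') a p q"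
      using mem_inv[OF ctC] by (simp add: load_inputs_id)
  qed
  then show ?thesis using pq t' by simp
qed

end


lemma par_regs:
  assumes "t1 < M" "t2 < M" "\<forall>i\<in>set is. D i < M \<and> (\<forall>(c,a,b)\<in>set (TS i). a < M \<and> b < M)"
  shows "\<forall>ins\<in>set (par t1 t2 D TS is). \<forall>r\<in>instr_regs ins. r < M"
  using assms unfolding par_def dotp_def tbody_def by fastforce

lemma len_concat_const: "(\<forall>x\<in>set xs. length (f x) = k) \<Longrightarrow> length (concat (map f xs)) = length xs * k"
  by (induction xs) auto

lemma len_tb: "length (concat (map (tbody t1 t2 d) ts)) = length ts * 4"
  by (rule len_concat_const) (simp add: tbody_def split: prod.splits)

lemma len_cmm: "length (concat (map (\<lambda>j. map (f j) xs) ys)) = length ys * length xs"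
  by (induction ys) auto

lemma len_par: "(\<forall>i\<in>set is. length (TS i) = k) \<Longrightarrow> length (par t1 t2 D TS is) = length is * (1 + 4*k)"
  unfolding par_def dotp_def
  by (rule len_concat_const) (simp add: len_tb)

context lay begin

lemma lt_W[simp]: "p < N \<Longrightarrow> q < N \<Longrightarrow> aW p q < Msz"
  using lt2[of p N q] by (simp add: adefs)
lemma lt_E[simp]: "p < N \<Longrightarrow> q < N \<Longrightarrow> aE p q < Msz"
  using lt2[of p N q] by (simp add: adefs)
lemma lt_L[simp]: "j < N \<Longrightarrow> aL j < Msz" by (simp add: adefs)
lemma lt_H[simp]: "j < N \<Longrightarrow> aH j < Msz" by (simp add: adefs)
lemma lt_Mu[simp]: "aMu < Msz" by (simp add: adefs)
lemma lt_One[simp]: "aOne < Msz" by (simp add: adefs)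
lemma lt_T1[simp]: "aT1 < Msz" by (simp add: adefs)
lemma lt_T2[simp]: "aT2 < Msz" by (simp add: adefs)
lemma lt_A[simp]: "a < C \<Longrightarrow> aA a < Msz" by (simp add: adefs)
lemma lt_K[simp]: "a < C \<Longrightarrow> g < C \<Longrightarrow> aK a g < Msz"
  using idx_lt[of a C g C] by (simp add: adefs)
lemma lt_V[simp]: "a < C \<Longrightarrow> g < C \<Longrightarrow> aV a g < Msz"
  using idx_lt[of a C g C] by (simp add: adefs)
lemma lt_O[simp]: "p < N \<Longrightarrow> q < N \<Longrightarrow> aO p q < Msz"
  using lt2[of p N q] by (simp add: adefs)
lemma lt_G[simp]: "a < C \<Longrightarrow> p < N \<Longrightarrow> q < N \<Longrightarrow> aG a p q < Msz"
  using lt3[of a C p N q] by (simp add: adefs)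
lemma lt_TT[simp]: "a < C \<Longrightarrow> p < N \<Longrightarrow> q < N \<Longrightarrow> aT a p q < Msz"
  using T_lt by simp

lemma valid:
  assumes ctC: "\<forall>j<N. ct j < C"
  shows "valid_machine Msz prog id aO N"
proof -
  have "\<forall>ins\<in>set P1. \<forall>r\<in>instr_regs ins. r < Msz" unfolding P1_def
    by (rule par_regs) (auto simp: TSA_def)
  moreover have "\<forall>ins\<in>set P2. \<forall>r\<in>instr_regs ins. r < Msz" unfolding P2_def
    by (rule par_regs) (auto simp: TSK_def idx2_def)
  moreover have "\<forall>ins\<in>set P2b. \<forall>r\<in>instr_regs ins. r < Msz" unfolding P2b_def
    by (rule par_regs) (auto simp: TSV_def idx2_def)
  moreover have "\<forall>ins\<in>set P3. \<forall>r\<in>instr_regs ins. r < Msz" unfolding P3_def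
    by (rule par_regs) (auto simp: TSO_def idxN_def)
  moreover have "\<forall>ins\<in>set P4. \<forall>r\<in>instr_regs ins. r < Msz" unfolding P4_def
    by (rule par_regs) (auto simp: TST_def idx3_def idxN_def ctC)
  moreover have "\<forall>ins\<in>set P5. \<forall>r\<in>instr_regs ins. r < Msz" unfolding P5_def
    by (rule par_regs) (auto simp: TSG_def idx3_def idxN_def)
  moreover have "\<forall>i<n_inputs N. i < Msz" by (simp add: adefs n_inputs_def power2_eq_square)
  ultimately show ?thesis
    unfolding valid_machine_def prog_def by auto
qed

lemma len_prog: "length prog = 1 + C*(1+4*N) + 2*(C*C*(1+4*(N*N))) + N*N*(1+4*(Suc C))
   + C*(N*N)*(1+4*(Suc C)) + C*(N*N)*5"
proof -
  have "length P1 = C*(1+4*N)" unfolding P1_def by (subst len_par[where k=N]) (auto simp: TSA_def)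
  moreover have "length P2 = C*C*(1+4*(N*N))" unfolding P2_def
    by (subst len_par[where k="N*N"]) (auto simp: TSK_def idx2_def len_cmm)
  moreover have "length P2b = C*C*(1+4*(N*N))" unfolding P2b_def
    by (subst len_par[where k="N*N"]) (auto simp: TSV_def idx2_def len_cmm)
  moreover have "length P3 = N*N*(1+4*(Suc C))" unfolding P3_def
    by (subst len_par[where k="Suc C"]) (auto simp: TSO_def idxN_def)
  moreover have "length P4 = C*(N*N)*(1+4*(Suc C))" unfolding P4_def
    by (subst len_par[where k="Suc C"]) (auto simp: TST_def idx3_def idxN_def)
  moreover have "length P5 = C*(N*N)*5" unfolding P5_def
    by (subst len_par[where k="1"]) (auto simp: TSG_def idx3_def idxN_def)
  ultimately show ?thesis by (simp add: prog_def)
qed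

end


lemma C_le_N:
  assumes "\<forall>\<alpha><C. \<exists>j<N. ct j = \<alpha>"
  shows "C \<le> (N::nat)"
proof -
  have "{..<C} \<subseteq> ct ` {..<N}" using assms by auto
  then have "card {..<C} \<le> card (ct ` {..<N})" by (rule card_mono[rotated]) simp
  also have "\<dots> \<le> card {..<N}" by (rule card_image_le) simp
  finally show ?thesis by simp
qed

lemma mono_l: "a \<le> (b::nat) \<Longrightarrow> c * a \<le> c * b" by simp

lemma bnd_len:
  assumes N: "1 \<le> N" and C: "1 \<le> (C::nat)"
  shows "1 + C*(1+4*N) + 2*(C*C*(1+4*(N*N))) + N*N*(1+4*(Suc C))
   + C*(N*N)*(1+4*(Suc C)) + C*(N*N)*5 \<le> 50 * (C*C*(N*N))"
proof -
  define X where "X = C*C*(N*N)"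
  have NN: "N \<le> N*N" using N by simp
  have NN1: "1 \<le> N*N" using N by simp
  have CC: "C \<le> C*C" using C by simp
  have CN: "C*(N*N) \<le> X" unfolding X_def using mono_l[OF CC, of "N*N"] by (simp add: mult_ac)
  have NX: "N*N \<le> C*(N*N)" using C by simp
  have CX: "C*C \<le> X" unfolding X_def using mono_l[OF NN1, of "C*C"] by simp
  have C1: "C \<le> C*(N*N)" using mono_l[OF NN1, of C] by simp
  have s1: "C*(1+4*N) \<le> 5*X"
  proof -
    have "C*(1+4*N) \<le> C*(5*(N*N))" using NN NN1 by (intro mono_l) linarith
    then show ?thesis using CN by simp
  qed
  have s2: "C*C*(1+4*(N*N)) \<le> 5*X"
  proof -
    have "C*C*(1+4*(N*N)) \<le> C*C*(5*(N*N))" using NN1 by (intro mono_l) simp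
    then show ?thesis unfolding X_def by simp
  qed
  have s3: "N*N*(1+4*(Suc C)) = 5*(N*N) + 4*(C*(N*N))" by (simp add: algebra_simps)
  have s4: "C*(N*N)*(1+4*(Suc C)) = 5*(C*(N*N)) + 4*X" unfolding X_def by (simp add: algebra_simps)
  have "1 \<le> X" using C1 CN C by linarith
  then show ?thesis using s1 s2 s3 s4 CN NX CX unfolding X_def[symmetric] by linarith
qed

context lay begin

lemma bnd_M:
  assumes N: "1 \<le> N" and C: "1 \<le> C" and CN: "C \<le> N"
  shows "Msz \<le> 20 * (C*(N*N))"
proof -
  define Y where "Y = C*(N*N)"
  have NN: "N \<le> N*N" using N by simp
  have NN1: "1 \<le> N*N" using N by simp
  have NY: "N*N \<le> Y" unfolding Y_def using C by simp
  have C1: "C \<le> Y" unfolding Y_def using mono_l[OF NN1, of C] by simp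
  have CCY: "C*C \<le> Y" unfolding Y_def using mono_l[OF order.trans[OF CN NN], of C] by simp
  have e: "Msz = 3*(N*N) + 4 + 2*N + C + 2*(C*C) + 2*Y" by (simp add: adefs Y_def)
  show ?thesis using NN NN1 NY C1 CCY unfolding e Y_def[symmetric] by linarith
qed

end


context lay begin
lemma exists_machine:
  assumes N: "1 \<le> N" and ctC: "\<forall>j<N. ct j < C" and CN: "C \<le> N"
  shows "\<exists>M0 prg pI pO.
          valid_machine M0 prg pI pO N \<and>
          real M0 \<le> 20 * real C * real N ^ 2 \<and>
          real (length prg) \<le> 50 * real C ^ 2 * real N ^ 2 \<and>
          (\<forall>W \<mu> e L h t p q. 1 \<le> t \<and> p < N \<and> q < N \<longrightarrow>
             mem_seq prg pI (n_inputs N) (mp_input N W \<mu> e L h) t (pO p q)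
               = modprop_update N C ct W \<mu> e L h p q t)"
proof -
  have C: "1 \<le> C" using ctC N by (metis less_one not_less not_less_zero order.strict_trans1)
  have M: "real Msz \<le> 20 * real C * real N ^ 2"
  proof -
    have "real Msz \<le> real (20 * (C*(N*N)))" using bnd_M[OF N C CN] by (rule of_nat_mono)
    then show ?thesis by (simp add: power2_eq_square mult_ac)
  qed
  have Lg: "real (length prog) \<le> 50 * real C ^ 2 * real N ^ 2"
  proof -
    have "length prog \<le> 50 * (C*C*(N*N))" unfolding len_prog by (rule bnd_len[OF N C])
    then have "real (length prog) \<le> real (50 * (C*C*(N*N)))" by (simp only: of_nat_le_iff)
    then show ?thesis by (simp add: power2_eq_square mult_ac)
  qed
  show ?thesis
    using valid[OF ctC] M Lg mem_out[OF ctC] by blast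
qed
end

theorem proposition1:
  shows "\<exists>c1 c2 :: real. c1 > 0 \<and> c2 > 0 \<and>
    (\<forall>(N::nat) (C::nat) (ct::nat \<Rightarrow> nat).
       N \<ge> 1 \<and> (\<forall>j<N. ct j < C) \<and> (\<forall>\<alpha><C. \<exists>j<N. ct j = \<alpha>) \<longrightarrow>
       (\<exists>M prog posIn posOut.
          valid_machine M prog posIn posOut N \<and>
          real M \<le> c1 * real C * real N ^ 2 \<and>
          real (length prog) \<le> c2 * real C ^ 2 * real N ^ 2 \<and>
          (\<forall>W \<mu> e L h t p q. 1 \<le> t \<and> p < N \<and> q < N \<longrightarrow>
             mem_seq prog posIn (n_inputs N) (mp_input N W \<mu> e L h) t (posOut p q)
               = modprop_update N C ct W \<mu> e L h p q t)))"
proof (rule exI[of _ 20], rule exI[of _ 50], intro conjI allI impI)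
  fix N C :: nat and ct :: "nat \<Rightarrow> nat"
  assume H: "N \<ge> 1 \<and> (\<forall>j<N. ct j < C) \<and> (\<forall>\<alpha><C. \<exists>j<N. ct j = \<alpha>)"
  have N: "1 \<le> N" and ctC: "\<forall>j<N. ct j < C" using H by auto
  have CN: "C \<le> N" using H C_le_N by blast
  show "\<exists>M prog posIn posOut.
          valid_machine M prog posIn posOut N \<and>
          real M \<le> 20 * real C * real N ^ 2 \<and>
          real (length prog) \<le> 50 * real C ^ 2 * real N ^ 2 \<and>
          (\<forall>W \<mu> e L h t p q. 1 \<le> t \<and> p < N \<and> q < N \<longrightarrow>
             mem_seq prog posIn (n_inputs N) (mp_input N W \<mu> e L h) t (posOut p q)
               = modprop_update N C ct W \<mu> e L h p q t)"
    by (rule lay.exists_machine[OF N ctC CN])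
qed simp_all


end
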